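(* Let $m\in\mathbb{N}$, let $G^1,\dots,G^m$ be compatible nontrivial monotonic hypergraph sequences, and let $1\le t<m$. Then for all $p,q\in\mathbb{R}_{>0}$, $$\mathrm{cr}((G^1,\dots,G^m),p+q)\le\max\big(\mathrm{cr}((G^1,\dots,G^t),p),\ \mathrm{cr}((G^{t+1},\dots,G^m),q)\big).$$
   Context: A finite hypergraph $G=(V,E)$ has finite vertex set $V$ and hyperedge set $E\subseteq\mathcal P(V)$. A sequence $(G_n)_{n\in\mathbb{N}}$ of finite hypergraphs is nontrivial monotonic if $V(G_n)\subseteq V(G_{n+1})$, $E(G_n)\subseteq E(G_{n+1})$ for all $n$, $V(G_1)\ne\emptyset$ and $\emptyset\notin E(G_n)$ for all $n$. Sequences $G^1,\dots,G^m$ are compatible if $V(G^1_n)=\dots=V(G^m_n)$ for all $n$. A set $S$ of vertices is independent in a hypergraph if it contains no hyperedge. For compatible sequences $G^1,\dots,G^r$ and $q\in\mathbb{R}_{>0}$, $\mathrm{cr}((G^1,\dots,G^r),q)\in\mathbb{N}\cup\{+\infty\}$ is the infimum of all $n\in\mathbb{N}$ such that for all $n'\ge n$ and all $r$-tuples $(S_1,\dots,S_r)$ of pairwise disjoint sets with $S_i$ independent in $G^i_{n'}$ we have $\frac{|S_1|+\dots+|S_r|}{|V(G^1_{n'})|}<q$ (infimum of the empty set is $+\infty$). *)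

theory Defs
  imports Complex_Main "HOL-Library.Extended_Nat"
begin

record 'a hypergraph =
  verts :: "'a set"
  hedges :: "'a set set"

definition finite_hypergraph :: "('a, 'b) hypergraph_scheme \<Rightarrow> bool" where
  "finite_hypergraph G \<longleftrightarrow> finite (verts G) \<and> hedges G \<subseteq> Pow (verts G)"

text \<open>Sequences are indexed by the positive naturals 1,2,3,...; values at index 0 are ignored.\<close>
type_synonym 'a hgseq = "nat \<Rightarrow> 'a hypergraph"

definition nontrivial_monotonic :: "'a hgseq \<Rightarrow> bool" where
  "nontrivial_monotonic G \<longleftrightarrow>
     (\<forall>n\<ge>1. finite_hypergraph (G n)) \<and>
     (\<forall>n\<ge>1. verts (G n) \<subseteq> verts (G (Suc n)) \<and> hedges (G n) \<subseteq> hedges (G (Suc n))) \<and>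
     verts (G 1) \<noteq> {} \<and>
     (\<forall>n\<ge>1. {} \<notin> hedges (G n))"

definition compatible :: "'a hgseq list \<Rightarrow> bool" where
  "compatible Gs \<longleftrightarrow> (\<forall>i<length Gs. \<forall>j<length Gs. \<forall>n\<ge>1. verts ((Gs!i) n) = verts ((Gs!j) n))"

definition independent :: "'a hypergraph \<Rightarrow> 'a set \<Rightarrow> bool" where
  "independent G S \<longleftrightarrow> S \<subseteq> verts G \<and> (\<forall>e\<in>hedges G. \<not> e \<subseteq> S)"

definition cr_good :: "'a hgseq list \<Rightarrow> real \<Rightarrow> nat \<Rightarrow> bool" where
  "cr_good Gs q n \<longleftrightarrow>
     (\<forall>n'\<ge>n. \<forall>S :: nat \<Rightarrow> 'a set.
        ((\<forall>i<length Gs. independent ((Gs!i) n') (S i)) \<and>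
         (\<forall>i<length Gs. \<forall>j<length Gs. i \<noteq> j \<longrightarrow> S i \<inter> S j = {}))
        \<longrightarrow> (\<Sum>i<length Gs. real (card (S i))) / real (card (verts ((hd Gs) n'))) < q)"

definition cr :: "'a hgseq list \<Rightarrow> real \<Rightarrow> enat" where
  "cr Gs q = (if \<exists>n\<ge>1. cr_good Gs q n
              then enat (LEAST n. n \<ge> 1 \<and> cr_good Gs q n) else \<infinity>)"

end

theory Submission
  imports Defs
begin

lemma good_mono: "cr_good Gs q n \<Longrightarrow> n \<le> m \<Longrightarrow> cr_good Gs q m"
  unfolding cr_good_def by auto

lemma cr_goodD:
  assumes "cr_good Gs q n" "n \<le> n'"
    "\<forall>i<length Gs. independent ((Gs!i) n') (S i)"
    "\<forall>i<length Gs. \<forall>j<length Gs. i \<noteq> j \<longrightarrow> S i \<inter> S j = {}"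
  shows "(\<Sum>i<length Gs. real (card (S i))) / real (card (verts ((hd Gs) n'))) < q"
  using assms unfolding cr_good_def by blast

lemma sum_split_nat: "(t::nat) \<le> L \<Longrightarrow> (\<Sum>i<L. f i) = (\<Sum>i<t. f i) + (\<Sum>i<L - t. f (i + t))"
proof -
  assume "t \<le> L"
  have "(\<Sum>i\<in>{0..<L}. f i) = (\<Sum>i\<in>{0..<t}. f i) + (\<Sum>i\<in>{t..<L}. f i)"
    using \<open>t \<le> L\<close> by (simp add: sum.atLeastLessThan_concat)
  also have "(\<Sum>i\<in>{t..<L}. f i) = (\<Sum>i\<in>{0..<L-t}. f (i + t))"
    using \<open>t \<le> L\<close> sum.shift_bounds_nat_ivl[of f 0 t "L - t"] by simp
  finally show ?thesis by (simp add: atLeast0LessThan)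
qed

lemma good_split:
  assumes comp: "compatible Gs" and t: "1 \<le> t" "t < length Gs"
    and g1: "cr_good (take t Gs) p n1" and g2: "cr_good (drop t Gs) q n2"
    and n1: "n1 \<ge> 1"
  shows "cr_good Gs (p + q) (max n1 n2)"
  unfolding cr_good_def
proof (intro allI impI)
  fix n' and S :: "nat \<Rightarrow> 'a set"
  assume n': "max n1 n2 \<le> n'"
  assume H: "(\<forall>i<length Gs. independent ((Gs!i) n') (S i)) \<and>
         (\<forall>i<length Gs. \<forall>j<length Gs. i \<noteq> j \<longrightarrow> S i \<inter> S j = {})"
  let ?c = "real (card (verts ((hd Gs) n')))"
  have A: "(\<Sum>i<t. real (card (S i))) / ?c < p"
  proof -
    have "(\<Sum>i<length (take t Gs). real (card (S i))) / real (card (verts ((hd (take t Gs)) n'))) < p"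
    proof -
      have i: "\<forall>i<length (take t Gs). independent (((take t Gs)!i) n') (S i)"
        using H t by simp
      have d: "\<forall>i<length (take t Gs). \<forall>j<length (take t Gs). i \<noteq> j \<longrightarrow> S i \<inter> S j = {}"
        using H t by simp
      have "n1 \<le> n'" using n' by simp
      then show ?thesis using g1 i d unfolding cr_good_def by blast
    qed
    moreover have "hd (take t Gs) = hd Gs" using t by (cases Gs) auto
    ultimately show ?thesis using t by simp
  qed
  have B: "(\<Sum>i<length Gs - t. real (card (S (i + t)))) / ?c < q"
  proof -
    have "(\<Sum>i<length (drop t Gs). real (card (S (i + t)))) / real (card (verts ((hd (drop t Gs)) n'))) < q"
    proof -
      have i: "\<forall>i<length (drop t Gs). independent (((drop t Gs)!i) n') (S (i + t))"
        using H t by (simp add: add.commute)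
      have d: "\<forall>i<length (drop t Gs). \<forall>j<length (drop t Gs). i \<noteq> j \<longrightarrow> S (i + t) \<inter> S (j + t) = {}"
        using H t by simp
      have "n2 \<le> n'" using n' by simp
      show ?thesis by (rule cr_goodD[of "drop t Gs" q n2 n' "\<lambda>i. S (i + t)", OF g2 \<open>n2 \<le> n'\<close> i d])
    qed
    moreover have "verts ((hd (drop t Gs)) n') = verts ((hd Gs) n')"
    proof -
      have "hd (drop t Gs) = Gs ! t" using t by (simp add: hd_drop_conv_nth)
      moreover have "hd Gs = Gs ! 0" using t by (cases Gs) auto
      moreover have "verts ((Gs ! t) n') = verts ((Gs ! 0) n')"
      proof -
        have cc: "\<And>i j n. i < length Gs \<Longrightarrow> j < length Gs \<Longrightarrow> n \<ge> 1 \<Longrightarrow> verts ((Gs!i) n) = verts ((Gs!j) n)"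
          using comp unfolding compatible_def by blast
        have "1 \<le> n'" using n' n1 by simp
        then show ?thesis using cc[of t 0 n'] t by (cases Gs) auto
      qed
      ultimately show ?thesis by (simp only:)
    qed
    ultimately show ?thesis by simp
  qed
  have "(\<Sum>i<length Gs. real (card (S i))) = (\<Sum>i<t. real (card (S i))) + (\<Sum>i<length Gs - t. real (card (S (i + t))))"
    using t by (intro sum_split_nat) simp
  then show "(\<Sum>i<length Gs. real (card (S i))) / ?c < p + q"
    using A B by (simp add: add_divide_distrib)
qed

theorem lemma3:
  fixes Gs :: "'a hgseq list" and t :: nat and p q :: real
  assumes "\<forall>i<length Gs. nontrivial_monotonic (Gs!i)"
    and "compatible Gs"
    and "1 \<le> t" and "t < length Gs"
    and "p > 0" and "q > 0"
  shows "cr Gs (p + q) \<le> max (cr (take t Gs) p) (cr (drop t Gs) q)"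
proof (cases "(\<exists>n\<ge>1. cr_good (take t Gs) p n) \<and> (\<exists>n\<ge>1. cr_good (drop t Gs) q n)")
  case False
  then show ?thesis unfolding cr_def by auto
next
  case True
  define n1 where "n1 = (LEAST n. n \<ge> 1 \<and> cr_good (take t Gs) p n)"
  define n2 where "n2 = (LEAST n. n \<ge> 1 \<and> cr_good (drop t Gs) q n)"
  have h1: "n1 \<ge> 1 \<and> cr_good (take t Gs) p n1"
    using True unfolding n1_def by (metis (mono_tags, lifting) LeastI)
  have h2: "n2 \<ge> 1 \<and> cr_good (drop t Gs) q n2"
    using True unfolding n2_def by (metis (mono_tags, lifting) LeastI)
  have g: "cr_good Gs (p + q) (max n1 n2)"
    using good_split[OF assms(2) assms(3) assms(4)] h1 h2 by blast
  have ex: "\<exists>n\<ge>1. cr_good Gs (p + q) n" using g h1 by (intro exI[of _ "max n1 n2"]) auto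
  have "(LEAST n. n \<ge> 1 \<and> cr_good Gs (p + q) n) \<le> max n1 n2"
    using g h1 by (intro Least_le) auto
  then show ?thesis using True ex unfolding cr_def n1_def[symmetric] n2_def[symmetric]
    by simp
qed

end
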